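(* Let $l\geq 2$ and $\phi_{K_l}(x,y)=S_{l-1}(\lambda)\alpha-S_{l-2}(\lambda)\beta$ be the Riley polynomial of $K_l$ as below. Then for each fixed real $x$, $\lim_{y\to\infty}(-1)^l\phi_{K_l}(x,y)=+\infty$.
   Context: $S_n$: $S_0=1$, $S_1=z$, $S_{n+1}=zS_n-S_{n-1}$. $\lambda(x,y)=9x^2-12x^4+4x^6-5y+10x^2y+2x^4y-4x^6y-11x^2y^2+8x^4y^2+x^6y^2+5y^3-4x^2y^3-3x^4y^3+3x^2y^4-y^5$, $\alpha(x,y)=1-4x^2+2x^4+2y-x^2y-x^4y-y^2+2x^2y^2-y^3$, $\beta(x,y)=-1+x^2-y$. $K_l$ is the two-bridge knot $K(10(l-1)+7,4(l-1)+3)$. *)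

theory Defs
  imports Complex_Main
begin

fun S :: "nat \<Rightarrow> real \<Rightarrow> real" where
  "S 0 z = 1"
| "S (Suc 0) z = z"
| "S (Suc (Suc n)) z = z * S (Suc n) z - S n z"

definition lam :: "real \<Rightarrow> real \<Rightarrow> real" where
  "lam x y = 9*x^2 - 12*x^4 + 4*x^6 - 5*y + 10*x^2*y + 2*x^4*y - 4*x^6*y
     - 11*x^2*y^2 + 8*x^4*y^2 + x^6*y^2 + 5*y^3 - 4*x^2*y^3 - 3*x^4*y^3
     + 3*x^2*y^4 - y^5"

definition alpha :: "real \<Rightarrow> real \<Rightarrow> real" where
  "alpha x y = 1 - 4*x^2 + 2*x^4 + 2*y - x^2*y - x^4*y - y^2 + 2*x^2*y^2 - y^3"

definition beta :: "real \<Rightarrow> real \<Rightarrow> real" where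
  "beta x y = -1 + x^2 - y"

text \<open>Riley polynomial of the two-bridge knot K_l = K(10(l-1)+7, 4(l-1)+3), l >= 2.\<close>
definition phiK :: "nat \<Rightarrow> real \<Rightarrow> real \<Rightarrow> real" where
  "phiK l x y = S (l - 1) (lam x y) * alpha x y - S (l - 2) (lam x y) * beta x y"

end

theory Submission
  imports Defs "HOL-Real_Asymp.Real_Asymp"
begin

lemma S_neg: "S n (-z) = (-1)^n * S n z"
  by (induction n z rule: S.induct) (auto simp: algebra_simps)

lemma S_mono: "w \<ge> 2 \<Longrightarrow> S n w \<ge> 1 \<and> S (Suc n) w \<ge> S n w"
proof (induction n)
  case 0 then show ?case by simp
next
  case (Suc n)
  then have a: "S n w \<ge> 1" "S (Suc n) w \<ge> S n w" by auto
  have r: "S (Suc (Suc n)) w = w * S (Suc n) w - S n w" by simp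
  have "(w - 1) * S (Suc n) w \<ge> 1 * S (Suc n) w"
    using a Suc.prems by (intro mult_right_mono) auto
  then have "w * S (Suc n) w \<ge> 2 * S (Suc n) w" by (simp add: algebra_simps)
  then show ?case using a r by linarith
qed

theorem lemma6p6:
  fixes l :: nat and x :: real
  assumes "l \<ge> 2"
  shows "filterlim (\<lambda>y. (-1) ^ l * phiK l x y) at_top at_top"
proof -
  obtain m where l: "l = Suc (Suc m)" using assms by (metis add_2_eq_Suc le_Suc_ex)
  have e1: "eventually (\<lambda>y. - lam x y \<ge> 2) at_top"
    unfolding lam_def by real_asymp
  have e2: "eventually (\<lambda>y. beta x y \<le> 0) at_top"
    unfolding beta_def by real_asymp
  have lim: "filterlim (\<lambda>y. - alpha x y) at_top at_top"
    unfolding alpha_def by real_asymp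
  have e3: "eventually (\<lambda>y. - alpha x y \<ge> 0) at_top"
    unfolding alpha_def by real_asymp
  have "eventually (\<lambda>y. (-1) ^ l * phiK l x y \<ge> - alpha x y) at_top"
    using e1 e2 e3
  proof eventually_elim
    case (elim y)
    define w where "w = - lam x y"
    have eq: "(-1) ^ l * phiK l x y = S (Suc m) w * (- alpha x y) + S m w * (- beta x y)"
      unfolding phiK_def l w_def using S_neg[of "Suc m" "lam x y"] S_neg[of m "lam x y"]
      by (simp add: algebra_simps)
    have s: "S m w \<ge> 1" "S (Suc m) w \<ge> 1"
      using S_mono[of w m] S_mono[of w "Suc m"] elim(1) unfolding w_def by auto
    have "S (Suc m) w * (- alpha x y) \<ge> 1 * (- alpha x y)"
      using s elim(3) by (intro mult_right_mono) auto
    moreover have "S m w * (- beta x y) \<ge> 0" using s elim(2) by (intro mult_nonneg_nonneg) auto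
    ultimately show ?case using eq by linarith
  qed
  then show ?thesis by (rule filterlim_at_top_mono[OF lim])
qed

end
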